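(* There is an absolute constant $c>0$ such that for every max game $\mathcal R$ on a graph with $n\ge2$ nodes, the price of anarchy satisfies $PoA\le c\,(L+\log n)$; that is, $PoA=O(L+\log n)$.
   Context: A routing game $(\mathbf N,G,\mathcal P)$: players $\{1,\dots,N\}$ ($N\ge1$), a simple graph $G$ with $n$ nodes, and for each player $i$ a nonempty finite set $\mathcal P_i$ of paths from $u_i$ to $v_i$; $L=\max_{p\in\bigcup_i\mathcal P_i}|p|$ (path length = number of edges). A routing is $\mathbf p=[p_1,\dots,p_N]$, $p_i\in\mathcal P_i$. $C_e(\mathbf p)$ = number of players whose path uses edge $e$; $C_i(\mathbf p)=\max_{e\in p_i}C_e(\mathbf p)$; $D_i(\mathbf p)=|p_i|$; $C(\mathbf p)=\max_eC_e(\mathbf p)$; $D(\mathbf p)=\max_i|p_i|$. Max game: player cost $pc_i=\max(C_i,D_i)$, social cost $SC=\max(C,D)$. A Nash-routing is one where no player can strictly lower $pc_i$ by unilaterally changing its path within $\mathcal P_i$. With $SC^*$ the minimum social cost over all routings and $\mathbf P$ the (nonempty) set of Nash-routings, $PoA=\sup_{\mathbf p\in\mathbf P}SC(\mathbf p)/SC^*$. *)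

theory Defs
  imports Complex_Main "HOL-Library.FuncSet"
begin

(* Graph: nodes are 0..<n, E is a set of undirected edges (2-element sets).
   Players are 0..<N.  A path is a nonempty list of distinct nodes, consecutive
   nodes being adjacent. *)

definition simple_graph :: "nat \<Rightarrow> nat set set \<Rightarrow> bool" where
  "simple_graph n E \<longleftrightarrow> (\<forall>e\<in>E. \<exists>a b. a \<noteq> b \<and> a < n \<and> b < n \<and> e = {a, b})"

definition path_edges :: "nat list \<Rightarrow> nat set set" where
  "path_edges xs = set (map (\<lambda>(a, b). {a, b}) (zip xs (tl xs)))"

definition plen :: "nat list \<Rightarrow> nat" where
  "plen xs = length xs - 1"

definition is_path :: "nat set set \<Rightarrow> nat \<Rightarrow> nat \<Rightarrow> nat list \<Rightarrow> bool" where
  "is_path E u v xs \<longleftrightarrow> xs \<noteq> [] \<and> hd xs = u \<and> last xs = v \<and> distinct xs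
     \<and> path_edges xs \<subseteq> E"

definition routing_game ::
  "nat \<Rightarrow> nat set set \<Rightarrow> nat \<Rightarrow> (nat \<Rightarrow> nat) \<Rightarrow> (nat \<Rightarrow> nat) \<Rightarrow> (nat \<Rightarrow> nat list set) \<Rightarrow> bool" where
  "routing_game n E N u v P \<longleftrightarrow> simple_graph n E \<and> N \<ge> 1 \<and>
     (\<forall>i<N. finite (P i) \<and> P i \<noteq> {} \<and> (\<forall>p\<in>P i. is_path E (u i) (v i) p))"

definition Lmax :: "nat \<Rightarrow> (nat \<Rightarrow> nat list set) \<Rightarrow> nat" where
  "Lmax N P = Max (plen ` (\<Union>i<N. P i))"

definition routings :: "nat \<Rightarrow> (nat \<Rightarrow> nat list set) \<Rightarrow> (nat \<Rightarrow> nat list) set" where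
  "routings N P = PiE {..<N} P"

definition edge_cong :: "nat \<Rightarrow> (nat \<Rightarrow> nat list) \<Rightarrow> nat set \<Rightarrow> nat" where
  "edge_cong N r e = card {i. i < N \<and> e \<in> path_edges (r i)}"

definition player_cong :: "nat \<Rightarrow> (nat \<Rightarrow> nat list) \<Rightarrow> nat \<Rightarrow> nat" where
  "player_cong N r i = Max (insert 0 (edge_cong N r ` path_edges (r i)))"

definition player_cost :: "nat \<Rightarrow> (nat \<Rightarrow> nat list) \<Rightarrow> nat \<Rightarrow> nat" where
  "player_cost N r i = max (player_cong N r i) (plen (r i))"

definition congestion :: "nat \<Rightarrow> nat set set \<Rightarrow> (nat \<Rightarrow> nat list) \<Rightarrow> nat" where
  "congestion N E r = Max (insert 0 (edge_cong N r ` E))"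

definition dilation :: "nat \<Rightarrow> (nat \<Rightarrow> nat list) \<Rightarrow> nat" where
  "dilation N r = Max (insert 0 ((\<lambda>i. plen (r i)) ` {..<N}))"

definition social_cost :: "nat \<Rightarrow> nat set set \<Rightarrow> (nat \<Rightarrow> nat list) \<Rightarrow> nat" where
  "social_cost N E r = max (congestion N E r) (dilation N r)"

definition opt_social_cost :: "nat \<Rightarrow> nat set set \<Rightarrow> (nat \<Rightarrow> nat list set) \<Rightarrow> nat" where
  "opt_social_cost N E P = Min (social_cost N E ` routings N P)"

definition nash_routings :: "nat \<Rightarrow> (nat \<Rightarrow> nat list set) \<Rightarrow> (nat \<Rightarrow> nat list) set" where
  "nash_routings N P = {r \<in> routings N P.
     \<forall>i<N. \<forall>q\<in>P i. player_cost N r i \<le> player_cost N (r(i := q)) i}"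

end

theory Submission
  imports Defs
begin

lemma ln2_ge_half: "ln (2::real) \<ge> 1/2"
proof -
  have "exp (1/2::real) ^ 2 = exp 1" by (simp add: power2_eq_square flip: exp_add)
  also have "\<dots> \<le> 2 ^ 2" using exp_le by simp
  finally have "exp (1/2::real) \<le> 2"
    by (rule power2_le_imp_le) simp
  then have "ln (exp (1/2::real)) \<le> ln 2" by (subst ln_le_cancel_iff) auto
  then show ?thesis by simp
qed

lemma finE:
  assumes "simple_graph n E" shows "finite E" "card E \<le> n^2"
proof -
  let ?F = "(\<lambda>(a,b). {a,b}) ` ({..<n}\<times>{..<n})"
  have sub: "E \<subseteq> ?F"
    using assms unfolding simple_graph_def by force
  have fF: "finite ?F" by simp
  show "finite E" using sub fF by (rule finite_subset)
  have "card E \<le> card ?F" using fF sub by (rule card_mono)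
  also have "\<dots> \<le> card ({..<n}\<times>{..<n})" by (rule card_image_le) simp
  finally show "card E \<le> n^2" by (simp add: power2_eq_square)
qed

lemma card_pe: "card (path_edges xs) \<le> plen xs"
proof -
  have "card (path_edges xs) \<le> length (map (\<lambda>(a, b). {a, b}) (zip xs (tl xs)))"
    unfolding path_edges_def by (rule card_length)
  then show ?thesis unfolding plen_def by simp
qed

lemma fin_pe: "finite (path_edges xs)"
  unfolding path_edges_def by simp

lemma edge_cong_upd: "edge_cong N (r(i:=q)) e \<le> Suc (edge_cong N r e)"
proof -
  have "{j. j < N \<and> e \<in> path_edges ((r(i:=q)) j)} \<subseteq> insert i {j. j < N \<and> e \<in> path_edges (r j)}"
    by auto
  then have "card {j. j < N \<and> e \<in> path_edges ((r(i:=q)) j)} \<le> card (insert i {j. j < N \<and> e \<in> path_edges (r j)})"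
    by (intro card_mono) auto
  also have "\<dots> \<le> Suc (card {j. j < N \<and> e \<in> path_edges (r j)})"
    by (simp add: card_insert_le_m1)
  finally show ?thesis unfolding edge_cong_def .
qed

lemma player_cong_ge: "e \<in> path_edges (r i) \<Longrightarrow> edge_cong N r e \<le> player_cong N r i"
  unfolding player_cong_def by (simp add: fin_pe)

lemma player_cong_ex:
  assumes "0 < player_cong N r i"
  shows "\<exists>e\<in>path_edges (r i). edge_cong N r e = player_cong N r i"
proof -
  have "player_cong N r i \<in> insert 0 (edge_cong N r ` path_edges (r i))"
    unfolding player_cong_def by (rule Max_in) (simp_all add: fin_pe)
  then show ?thesis using assms by auto
qed

lemma card_filter_sum: "finite I \<Longrightarrow> card {i\<in>I. Q i} = (\<Sum>i\<in>I. if Q i then 1 else 0)"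
  by (simp add: sum.If_cases Int_def)

lemma double_count:
  assumes "finite A"
  shows "(\<Sum>e\<in>A. edge_cong N r e) = (\<Sum>i<N. card (path_edges (r i) \<inter> A))"
proof -
  have "(\<Sum>e\<in>A. edge_cong N r e) = (\<Sum>e\<in>A. \<Sum>i<N. if e \<in> path_edges (r i) then 1 else 0)"
    unfolding edge_cong_def
    by (intro sum.cong refl) (simp add: card_filter_sum[of "{..<N}", simplified, symmetric])
  also have "\<dots> = (\<Sum>i<N. \<Sum>e\<in>A. if e \<in> path_edges (r i) then 1 else 0)"
    by (rule sum.swap)
  also have "\<dots> = (\<Sum>i<N. card (path_edges (r i) \<inter> A))"
  proof (intro sum.cong refl)
    fix i
    have "path_edges (r i) \<inter> A = {e\<in>A. e \<in> path_edges (r i)}" by auto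
    then show "(\<Sum>e\<in>A. if e \<in> path_edges (r i) then 1 else 0) = card (path_edges (r i) \<inter> A)"
      using card_filter_sum[OF assms] by simp
  qed
  finally show ?thesis .
qed

lemma hd_last_distinct:
  assumes "distinct xs" "length xs \<ge> 2" shows "hd xs \<noteq> last xs"
proof (cases xs)
  case Nil then show ?thesis using assms by simp
next
  case (Cons a ys)
  then have "ys \<noteq> []" using assms by auto
  then have "last xs \<in> set ys" using Cons by simp
  then show ?thesis using Cons assms by auto
qed

lemma main_bound:
  fixes n :: nat and E N u v P r
  assumes n2: "n \<ge> 2" and rg: "routing_game n E N u v P" and nash: "r \<in> nash_routings N P"
  shows "real (social_cost N E r) \<le> 4 * (real (Lmax N P) + ln (real n)) * real (opt_social_cost N E P)"
proof -
  have sg: "simple_graph n E" and N1: "N \<ge> 1"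
    and Pfin: "\<And>i. i < N \<Longrightarrow> finite (P i)" and Pne: "\<And>i. i < N \<Longrightarrow> P i \<noteq> {}"
    and Ppath: "\<And>i p. i < N \<Longrightarrow> p \<in> P i \<Longrightarrow> is_path E (u i) (v i) p"
    using rg unfolding routing_game_def by auto
  have finE: "finite E" and cardE: "card E \<le> n^2" using finE[OF sg] by auto
  have rP: "\<And>i. i < N \<Longrightarrow> r i \<in> P i"
    using nash unfolding nash_routings_def routings_def by (auto simp: PiE_iff)
  have nashc: "\<And>i q. i < N \<Longrightarrow> q \<in> P i \<Longrightarrow> player_cost N r i \<le> player_cost N (r(i:=q)) i"
    using nash unfolding nash_routings_def by auto
  define L where "L = Lmax N P"
  have finU: "finite (\<Union>i<N. P i)" using Pfin by auto
  have plenL: "\<And>i p. i < N \<Longrightarrow> p \<in> P i \<Longrightarrow> plen p \<le> L"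
    unfolding L_def Lmax_def using finU by (intro Max_ge) auto
  have pathE: "\<And>i p. i < N \<Longrightarrow> p \<in> P i \<Longrightarrow> path_edges p \<subseteq> E"
    using Ppath unfolding is_path_def by blast
  have finR: "finite (routings N P)" unfolding routings_def using Pfin by (intro finite_PiE) auto
  have neR: "routings N P \<noteq> {}" unfolding routings_def using Pne by (auto simp: PiE_eq_empty_iff)
  obtain s where sR: "s \<in> routings N P" and sopt: "social_cost N E s = opt_social_cost N E P"
  proof -
    have "opt_social_cost N E P \<in> social_cost N E ` routings N P"
      unfolding opt_social_cost_def using finR neR by (intro Min_in) auto
    then show ?thesis using that by auto
  qed
  have sP: "\<And>i. i < N \<Longrightarrow> s i \<in> P i" using sR unfolding routings_def by (auto simp: PiE_iff)
  define Cs where "Cs = congestion N E s"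
  define OPT where "OPT = opt_social_cost N E P"
  have CsOPT: "Cs \<le> OPT" unfolding Cs_def OPT_def sopt[symmetric] social_cost_def by simp
  have congs: "\<And>e. e \<in> E \<Longrightarrow> edge_cong N s e \<le> Cs"
    unfolding Cs_def congestion_def using finE by (intro Max_ge) auto
  define A where "A t = {e\<in>E. t \<le> edge_cong N r e}" for t
  have finA: "finite (A t)" for t unfolding A_def using finE by auto
  define S where "S t = {i. i < N \<and> path_edges (r i) \<inter> A t \<noteq> {}}" for t
  have step1: "t * card (A t) \<le> L * card (S t)" for t
  proof -
    have "t * card (A t) = (\<Sum>e\<in>A t. t)" by simp
    also have "\<dots> \<le> (\<Sum>e\<in>A t. edge_cong N r e)" by (intro sum_mono) (simp add: A_def)
    also have "\<dots> = (\<Sum>i<N. card (path_edges (r i) \<inter> A t))" by (rule double_count[OF finA])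
    also have "\<dots> = (\<Sum>i\<in>S t. card (path_edges (r i) \<inter> A t))"
      by (rule sum.mono_neutral_right) (auto simp: S_def)
    also have "\<dots> \<le> (\<Sum>i\<in>S t. L)"
    proof (intro sum_mono)
      fix i assume "i \<in> S t"
      then have i: "i < N" by (simp add: S_def)
      have "card (path_edges (r i) \<inter> A t) \<le> card (path_edges (r i))"
        by (intro card_mono) (auto simp: fin_pe)
      also have "\<dots> \<le> plen (r i)" by (rule card_pe)
      also have "\<dots> \<le> L" using plenL[OF i rP[OF i]] .
      finally show "card (path_edges (r i) \<inter> A t) \<le> L" .
    qed
    also have "\<dots> = L * card (S t)" by simp
    finally show ?thesis .
  qed
  have step2: "card (S t) \<le> Cs * card (A (t-1))" if tL: "t > L" for t
  proof -
    have sub: "S t \<subseteq> (\<Union>e\<in>A (t-1). {i. i < N \<and> e \<in> path_edges (s i)})"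
    proof
      fix i assume "i \<in> S t"
      then obtain e where i: "i < N" and e: "e \<in> path_edges (r i)" "e \<in> A t" by (auto simp: S_def)
      have "t \<le> player_cong N r i" using player_cong_ge[of e r i N] e by (auto simp: A_def)
      then have "t \<le> player_cost N r i" by (simp add: player_cost_def)
      also have "\<dots> \<le> player_cost N (r(i:=s i)) i" by (rule nashc[OF i sP[OF i]])
      finally have tc: "t \<le> player_cost N (r(i:=s i)) i" .
      have "plen (s i) \<le> L" using plenL[OF i sP[OF i]] .
      then have "t \<le> player_cong N (r(i:=s i)) i" using tc tL by (simp add: player_cost_def)
      then obtain e' where e': "e' \<in> path_edges (s i)" "t \<le> edge_cong N (r(i:=s i)) e'"
        using player_cong_ex[of N "r(i:=s i)" i] tL by fastforce
      have "t - 1 \<le> edge_cong N r e'" using e'(2) edge_cong_upd[of N r i "s i" e'] by linarith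
      moreover have "e' \<in> E" using pathE[OF i sP[OF i]] e'(1) by auto
      ultimately have "e' \<in> A (t-1)" by (simp add: A_def)
      then show "i \<in> (\<Union>e\<in>A (t-1). {i. i < N \<and> e \<in> path_edges (s i)})" using i e'(1) by auto
    qed
    have "card (S t) \<le> card (\<Union>e\<in>A (t-1). {i. i < N \<and> e \<in> path_edges (s i)})"
      by (intro card_mono[OF _ sub]) (auto intro: finite_subset[of _ "{..<N}"])
    also have "\<dots> \<le> (\<Sum>e\<in>A (t-1). card {i. i < N \<and> e \<in> path_edges (s i)})"
      by (rule card_UN_le[OF finA])
    also have "\<dots> \<le> (\<Sum>e\<in>A (t-1). Cs)"
      by (intro sum_mono) (auto simp: A_def edge_cong_def[symmetric] congs)
    also have "\<dots> = Cs * card (A (t-1))" by simp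
    finally show ?thesis .
  qed
  define T where "T = L + 2 * L * Cs"
  have step: "2 * card (A t) \<le> card (A (t-1))" if tT: "t > T" for t
  proof -
    have tL: "t > L" using tT by (simp add: T_def)
    have main: "t * card (A t) \<le> (L * Cs) * card (A (t-1))"
    proof -
      have "t * card (A t) \<le> L * card (S t)" by (rule step1)
      also have "\<dots> \<le> L * (Cs * card (A (t-1)))" using step2[OF tL] by (rule mult_le_mono2)
      finally show ?thesis by (simp add: mult.assoc)
    qed
    show ?thesis
    proof (cases "L * Cs = 0")
      case True
      then have "L * Cs * card (A (t-1)) = 0" by simp
      then have "t * card (A t) \<le> 0" using main by linarith
      then have "card (A t) = 0" using tT by simp
      then show ?thesis by simp
    next
      case False
      have "(L * Cs) * (2 * card (A t)) = (2 * (L * Cs)) * card (A t)" by simp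
      also have "\<dots> \<le> t * card (A t)" using tT by (intro mult_le_mono1) (simp add: T_def)
      also have "\<dots> \<le> (L * Cs) * card (A (t-1))" by (rule main)
      finally show ?thesis using False by simp
    qed
  qed
  define C where "C = congestion N E r"
  have aC: "card (A C) \<ge> 1" if C1: "C \<ge> 1"
  proof -
    have "C \<in> insert 0 (edge_cong N r ` E)"
      unfolding C_def congestion_def using finE by (intro Max_in) auto
    then obtain e where "e \<in> E" "edge_cong N r e = C" using C1 by auto
    then have "e \<in> A C" by (simp add: A_def)
    then show ?thesis using finA[of C] by (metis One_nat_def Suc_leI card_gt_0_iff empty_iff)
  qed
  have pow: "2 ^ (C - T) \<le> n^2"
  proof (cases "C \<ge> 1")
    case False
    then have "C - T = 0" by linarith
    moreover have "1 \<le> n^2" using n2 by (simp add: Suc_le_eq)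
    ultimately show ?thesis by (simp only: power_0)
  next
    case True
    have ind: "k \<le> C - T \<Longrightarrow> 2 ^ k \<le> card (A (C - k))" for k
    proof (induction k)
      case 0 then show ?case using aC[OF True] by simp
    next
      case (Suc k)
      then have k: "k \<le> C - T" "T < C - k" by linarith+
      have ih: "2 ^ k \<le> card (A (C - k))" using Suc.IH[OF k(1)] .
      have st: "2 * card (A (C - k)) \<le> card (A (C - k - 1))" using k(2) by (rule step)
      have eq: "C - k - 1 = C - Suc k" by linarith
      have "2 ^ Suc k = 2 * 2 ^ k" by (rule power_Suc)
      also have "\<dots> \<le> 2 * card (A (C - k))" using ih by linarith
      also have "\<dots> \<le> card (A (C - Suc k))" using st unfolding eq .
      finally show ?case .
    qed
    have "2 ^ (C - T) \<le> card (A (C - (C - T)))" by (rule ind) (rule order_refl)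
    also have "\<dots> \<le> card E" unfolding A_def using finE by (intro card_mono) auto
    also have "\<dots> \<le> n^2" by (rule cardE)
    finally show ?thesis .
  qed
  have lnb: "real (C - T) \<le> 4 * ln (real n)"
  proof -
    have "real (2 ^ (C - T)) \<le> real (n^2)" using pow by (simp only: of_nat_le_iff)
    then have p: "(2::real) ^ (C - T) \<le> real n ^ 2" by (simp only: of_nat_power of_nat_numeral)
    have "ln ((2::real) ^ (C - T)) \<le> ln (real n ^ 2)"
      using p n2 by (subst ln_le_cancel_iff) simp_all
    then have "real (C - T) * ln 2 \<le> 2 * ln (real n)"
      using n2 by (simp add: ln_realpow)
    moreover have "real (C - T) * (1/2) \<le> real (C - T) * ln 2"
      using ln2_ge_half by (intro mult_left_mono) auto
    ultimately show ?thesis by linarith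
  qed
  have Cb: "real C \<le> real T + 4 * ln (real n)" using lnb by linarith
  have dilL: "dilation N r \<le> L"
    unfolding dilation_def using plenL rP by (intro Max.boundedI) auto
  have lnpos: "ln (real n) \<ge> 0" using n2 by simp
  show ?thesis
  proof (cases "L = 0")
    case True
    have "C = 0"
    proof (rule ccontr)
      assume "C \<noteq> 0"
      then have "C * card (A C) \<ge> 1" using aC by simp
      then show False using step1[of C] True by simp
    qed
    then have "social_cost N E r = 0" using dilL True by (simp add: social_cost_def C_def)
    then show ?thesis using lnpos by simp
  next
    case False
    have "L \<in> plen ` (\<Union>i<N. P i)"
      unfolding L_def Lmax_def using finU Pne[of 0] N1 by (intro Max_in) (auto simp: Suc_le_eq)
    then obtain i p where i: "i < N" and p: "p \<in> P i" and pL: "plen p = L" by auto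
    have "hd p \<noteq> last p" using Ppath[OF i p] pL False
      by (intro hd_last_distinct) (auto simp: is_path_def plen_def)
    then have uv: "u i \<noteq> v i" using Ppath[OF i p] by (simp add: is_path_def)
    have "plen (s i) \<ge> 1"
    proof (rule ccontr)
      assume "\<not> plen (s i) \<ge> 1"
      then have "length (s i) \<le> 1" by (simp add: plen_def)
      moreover have "s i \<noteq> []" using Ppath[OF i sP[OF i]] by (simp add: is_path_def)
      ultimately obtain x where "s i = [x]" by (cases "s i") auto
      then show False using Ppath[OF i sP[OF i]] uv by (simp add: is_path_def)
    qed
    moreover have "plen (s i) \<le> dilation N s"
      unfolding dilation_def using i by (intro Max_ge) auto
    ultimately have OPT1: "OPT \<ge> 1" unfolding OPT_def sopt[symmetric] social_cost_def by simp
    have L1: "L \<ge> 1" using False by simp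
    have sc: "real (social_cost N E r) \<le> max (real C) (real L)"
      using dilL by (simp add: social_cost_def C_def)
    have O1r: "1 \<le> real OPT" using OPT1 by simp
    have LO: "real L \<le> real L * real OPT" using O1r by (simp add: mult_le_cancel_left1)
    have CsO: "real Cs \<le> real OPT" using CsOPT by simp
    have LCs: "2 * real L * real Cs \<le> 2 * real L * real OPT" using CsO by (intro mult_left_mono) simp_all
    have "real T = real L + 2 * real L * real Cs" by (simp add: T_def)
    then have Tb: "real T \<le> 3 * real L * real OPT" using LO LCs by linarith
    have lnO: "ln (real n) \<le> ln (real n) * real OPT"
      using lnpos O1r by (simp add: mult_le_cancel_left1)
    have "max (real C) (real L) \<le> 4 * (real L + ln (real n)) * real OPT"
      using Cb Tb lnO LO lnpos O1r by (simp add: algebra_simps)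
    then show ?thesis using sc unfolding OPT_def L_def by linarith
  qed
qed

theorem mainTheorem6:
  shows "\<exists>c::real. c > 0 \<and>
    (\<forall>n E N u v P. n \<ge> 2 \<longrightarrow> routing_game n E N u v P \<longrightarrow>
       (\<forall>r \<in> nash_routings N P.
          real (social_cost N E r)
            \<le> c * (real (Lmax N P) + ln (real n)) * real (opt_social_cost N E P)))"
proof (intro exI[of _ "4::real"] conjI allI impI ballI)
  fix n E N u v P r
  assume "(2::nat) \<le> n" "routing_game n E N u v P" "r \<in> nash_routings N P"
  then show "real (social_cost N E r)
            \<le> 4 * (real (Lmax N P) + ln (real n)) * real (opt_social_cost N E P)"
    by (rule main_bound)
qed simp

end
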